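(* Let $\{\varphi_i\}_{i=1}^N\subset S^{d-1}$ be a frame for $\mathbb{R}^d$ with frame operator $S_\Phi=\sum_{i=1}^N\varphi_i\varphi_i^\top$, and let $\{\psi_i\}_{i=1}^N$ be a dual frame to it (i.e. $x=\sum_i\langle x,\varphi_i\rangle\psi_i$ for all $x\in\mathbb{R}^d$). For each $i$ let $z_i=\psi_i-S_\Phi^{-1}\varphi_i$, and let $a:=\min_{i\ne j}\langle\varphi_i,S_\Phi^{-1}(\varphi_i-\varphi_j)\rangle$. If $\max_j\|z_j\|\le a/N$, then the identity permutation is the optimal permutation $\sigma$ for the mass transport problem between $\frac1N\sum_i\delta_{\varphi_i}$ and $\frac1N\sum_i\delta_{\psi_i}$, i.e. it minimizes $\frac1N\sum_{i=1}^N\|\varphi_i-\psi_{\sigma(i)}\|^2$ over all permutations $\sigma$ of $\{1,\dots,N\}$.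
   Context: $S^{d-1}$ is the unit sphere in $\mathbb{R}^d$. A finite frame is a finite spanning set of $\mathbb{R}^d$. *)

theory Defs
  imports "HOL-Analysis.Analysis" "HOL-Combinatorics.Permutations"
begin

definition frame_op :: "(nat \<Rightarrow> 'a::euclidean_space) \<Rightarrow> nat \<Rightarrow> 'a \<Rightarrow> 'a" where
  "frame_op phi N = (\<lambda>x. \<Sum>i<N. (x \<bullet> phi i) *\<^sub>R phi i)"

definition is_frame :: "(nat \<Rightarrow> 'a::euclidean_space) \<Rightarrow> nat \<Rightarrow> bool" where
  "is_frame phi N \<longleftrightarrow> span (phi ` {..<N}) = UNIV"

definition is_dual_frame :: "(nat \<Rightarrow> 'a::euclidean_space) \<Rightarrow> (nat \<Rightarrow> 'a) \<Rightarrow> nat \<Rightarrow> bool" where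
  "is_dual_frame phi psi N \<longleftrightarrow> (\<forall>x. x = (\<Sum>i<N. (x \<bullet> phi i) *\<^sub>R psi i))"

end

theory Submission
  imports Defs
begin

lemma frame_op_linear: "linear (frame_op phi N)"
  unfolding frame_op_def
  by (rule linearI) (simp_all add: inner_add_left scaleR_add_left sum.distrib scaleR_sum_right)

lemma frame_op_inj:
  fixes phi :: "nat \<Rightarrow> 'a::euclidean_space"
  assumes frame: "is_frame phi N"
  shows "inj (frame_op phi N)"
proof -
  have "x = 0" if h: "frame_op phi N x = 0" for x
  proof -
    have "x \<bullet> frame_op phi N x = (\<Sum>i<N. (x \<bullet> phi i)^2)"
      unfolding frame_op_def by (simp add: inner_sum_right power2_eq_square)
    with h have "(\<Sum>i<N. (x \<bullet> phi i)^2) = 0" by simp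
    hence z: "\<forall>i\<in>{..<N}. (x \<bullet> phi i)^2 = 0"
      by (subst (asm) sum_nonneg_eq_0_iff) auto
    have "x \<in> span (phi ` {..<N})" using frame by (simp add: is_frame_def)
    moreover have "\<And>y. y \<in> phi ` {..<N} \<Longrightarrow> orthogonal x y"
      using z by (auto simp: orthogonal_def)
    ultimately have "orthogonal x x" by (rule orthogonal_to_span)
    thus ?thesis by (simp add: orthogonal_def)
  qed
  thus ?thesis using frame_op_linear linear_injective_0 by blast
qed

theorem mainTheorem10:
  fixes phi psi :: "nat \<Rightarrow> 'a::euclidean_space" and N :: nat
  assumes frame: "is_frame phi N"
    and unit: "\<forall>i<N. norm (phi i) = 1"
    and dual: "is_dual_frame phi psi N"
    and small: "(MAX j\<in>{..<N}. norm (psi j - inv (frame_op phi N) (phi j)))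
        \<le> (Min {phi i \<bullet> inv (frame_op phi N) (phi i - phi j) | i j. i < N \<and> j < N \<and> i \<noteq> j}) / real N"
  shows "\<forall>\<sigma>. \<sigma> permutes {..<N} \<longrightarrow>
           (1 / real N) * (\<Sum>i<N. (norm (phi i - psi i))\<^sup>2)
             \<le> (1 / real N) * (\<Sum>i<N. (norm (phi i - psi (\<sigma> i)))\<^sup>2)"
proof (intro allI impI)
  fix \<sigma> assume sp: "\<sigma> permutes {..<N}"
  define T where "T = inv (frame_op phi N)"
  have linT: "linear T" unfolding T_def
    by (rule inj_linear_imp_inv_linear[OF frame_op_linear frame_op_inj[OF frame]])
  define M where "M = (MAX j\<in>{..<N}. norm (psi j - T (phi j)))"
  define a where "a = Min {phi i \<bullet> T (phi i - phi j) | i j. i < N \<and> j < N \<and> i \<noteq> j}"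
  have sm: "M \<le> a / real N" using small unfolding M_def a_def T_def .
  have key: "phi i \<bullet> psi (\<sigma> i) \<le> phi i \<bullet> psi i" if i: "i < N" for i
  proof (cases "\<sigma> i = i")
    case True thus ?thesis by simp
  next
    case False
    define j where "j = \<sigma> i"
    have j: "j < N" using sp i unfolding j_def using permutes_in_image[OF sp] by simp
    have N2: "N \<ge> 2" using i j False unfolding j_def by linarith
    have Mk: "norm (psi k - T (phi k)) \<le> M" if "k < N" for k
      unfolding M_def using that by (intro Max_ge) auto
    have M0: "0 \<le> M" using Mk[OF i] norm_ge_zero[of "psi i - T (phi i)"] by linarith
    have "M * real N \<le> a" using sm N2 by (simp add: field_simps)
    moreover have "M * 2 \<le> M * real N" using M0 N2 by (intro mult_left_mono) auto
    ultimately have a2: "2 * M \<le> a" by linarith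
    have fin: "finite {phi i \<bullet> T (phi i - phi j) | i j. i < N \<and> j < N \<and> i \<noteq> j}"
    proof -
      have "{phi i \<bullet> T (phi i - phi j) | i j. i < N \<and> j < N \<and> i \<noteq> j}
            \<subseteq> (\<lambda>(i,j). phi i \<bullet> T (phi i - phi j)) ` ({..<N} \<times> {..<N})" by auto
      thus ?thesis by (rule finite_subset) auto
    qed
    have amin: "a \<le> phi i \<bullet> T (phi i - phi j)" unfolding a_def
      using i j False unfolding j_def by (intro Min_le[OF fin] CollectI exI[of _ i] exI[of _ "\<sigma> i"]) simp
    have T: "T (phi i - phi j) = T (phi i) - T (phi j)" using linT by (simp add: linear_diff)
    have b1: "\<bar>phi i \<bullet> (psi i - T (phi i))\<bar> \<le> M"
      using Cauchy_Schwarz_ineq2[of "phi i" "psi i - T (phi i)"] unit i Mk[OF i] by simp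
    have b2: "\<bar>phi i \<bullet> (psi j - T (phi j))\<bar> \<le> M"
      using Cauchy_Schwarz_ineq2[of "phi i" "psi j - T (phi j)"] unit i Mk[OF j] by simp
    have "phi i \<bullet> psi i - phi i \<bullet> psi j = phi i \<bullet> T (phi i - phi j)
       + phi i \<bullet> (psi i - T (phi i)) - phi i \<bullet> (psi j - T (phi j))"
      by (simp add: T inner_diff_right)
    thus ?thesis using amin b1 b2 a2 unfolding j_def by linarith
  qed
  have e: "(norm (phi i - psi k))\<^sup>2 = (norm (phi i))\<^sup>2 - 2 * (phi i \<bullet> psi k) + (norm (psi k))\<^sup>2" for i k
    by (simp add: power2_norm_eq_inner inner_diff_left inner_diff_right inner_commute)
  have perm: "(\<Sum>i<N. (norm (psi (\<sigma> i)))\<^sup>2) = (\<Sum>i<N. (norm (psi i))\<^sup>2)"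
    using sum.permute[OF sp, of "\<lambda>i. (norm (psi i))\<^sup>2"] by (simp add: comp_def)
  have "(\<Sum>i<N. (norm (phi i - psi i))\<^sup>2) \<le> (\<Sum>i<N. (norm (phi i - psi (\<sigma> i)))\<^sup>2)"
  proof -
    have "(\<Sum>i<N. (norm (phi i - psi i))\<^sup>2) = (\<Sum>i<N. (norm (phi i))\<^sup>2) - 2 * (\<Sum>i<N. phi i \<bullet> psi i) + (\<Sum>i<N. (norm (psi i))\<^sup>2)"
      by (simp add: e sum.distrib sum_subtractf sum_distrib_left)
    moreover have "(\<Sum>i<N. (norm (phi i - psi (\<sigma> i)))\<^sup>2) = (\<Sum>i<N. (norm (phi i))\<^sup>2) - 2 * (\<Sum>i<N. phi i \<bullet> psi (\<sigma> i)) + (\<Sum>i<N. (norm (psi (\<sigma> i)))\<^sup>2)"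
      by (simp add: e sum.distrib sum_subtractf sum_distrib_left)
    moreover have "(\<Sum>i<N. phi i \<bullet> psi (\<sigma> i)) \<le> (\<Sum>i<N. phi i \<bullet> psi i)"
      using key by (intro sum_mono) auto
    ultimately show ?thesis using perm by linarith
  qed
  thus "(1 / real N) * (\<Sum>i<N. (norm (phi i - psi i))\<^sup>2)
             \<le> (1 / real N) * (\<Sum>i<N. (norm (phi i - psi (\<sigma> i)))\<^sup>2)"
    by (intro mult_left_mono) auto
qed

end
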